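(* Let $2\leq d_1\leq d_2$ and let $X$ be a positive semidefinite matrix in $\mathcal{M}_{d_1}\otimes\mathcal{M}_{d_2}$, written as $X=\sum_{i,j=1}^{d_1}\ket{i}\bra{j}\otimes X_{ij}$ with blocks $X_{ij}\in\mathcal{M}_{d_2}$. If $\mathrm{SN}(X)=d_1$, then there exist distinct $k_1,k_2\in\{1,\ldots,d_1\}$ such that \[ Y=\sum_{s,t=1}^{2}\ket{s}\bra{t}\otimes X_{k_sk_t}\in\mathcal{M}_2\otimes\mathcal{M}_{d_2} \] is entangled.
   Context: $\mathcal{M}_d$: complex $d\times d$ matrices. A positive semidefinite $W\in\mathcal{M}_{a}\otimes\mathcal{M}_{b}$ is separable if it is a finite sum $\sum_i P_i\otimes Q_i$ with $P_i,Q_i$ positive semidefinite, and entangled otherwise. The Schmidt rank of $\ket{\psi}$ is the rank of $\mathrm{tr}_A\ket{\psi}\bra{\psi}$; for a nonzero positive semidefinite $W$, $\mathrm{SN}(W)$ is the minimum over decompositions $W=\sum_ip_i\ket{\psi_i}\bra{\psi_i}$ ($p_i>0$) of the maximal Schmidt rank of the $\ket{\psi_i}$. *)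

theory Defs
  imports Complex_Main "Jordan_Normal_Form.DL_Rank"
begin

text \<open>A bipartite space C^a (x) C^b is identified with C^(a*b) via the index
  (i,x) maps to i*b + x (first factor most significant), i.e. the Kronecker convention.
  All indices are 0-based.\<close>

definition hermitian :: "nat \<Rightarrow> complex mat \<Rightarrow> bool" where
  "hermitian n A \<longleftrightarrow> A \<in> carrier_mat n n \<and>
     (\<forall>i<n. \<forall>j<n. A $$ (i, j) = cnj (A $$ (j, i)))"

definition psd :: "nat \<Rightarrow> complex mat \<Rightarrow> bool" where
  "psd n A \<longleftrightarrow> hermitian n A \<and>
     (\<forall>v \<in> carrier_vec n. 0 \<le> Re (\<Sum>i<n. \<Sum>j<n. cnj (v $ i) * A $$ (i, j) * v $ j))"

definition kron :: "nat \<Rightarrow> nat \<Rightarrow> complex mat \<Rightarrow> complex mat \<Rightarrow> complex mat" where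
  "kron a b P Q = mat (a * b) (a * b)
     (\<lambda>(r, c). P $$ (r div b, c div b) * Q $$ (r mod b, c mod b))"

definition separable :: "nat \<Rightarrow> nat \<Rightarrow> complex mat \<Rightarrow> bool" where
  "separable a b W \<longleftrightarrow> W \<in> carrier_mat (a * b) (a * b) \<and>
     (\<exists>(n::nat) P Q. (\<forall>i<n. psd a (P i) \<and> psd b (Q i)) \<and>
        (\<forall>r < a * b. \<forall>c < a * b. W $$ (r, c) = (\<Sum>i<n. kron a b (P i) (Q i) $$ (r, c))))"

definition entangled :: "nat \<Rightarrow> nat \<Rightarrow> complex mat \<Rightarrow> bool" where
  "entangled a b W \<longleftrightarrow> psd (a * b) W \<and> \<not> separable a b W"

definition outer :: "nat \<Rightarrow> complex vec \<Rightarrow> complex mat" where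
  "outer n v = mat n n (\<lambda>(i, j). v $ i * cnj (v $ j))"

definition ptrace_A :: "nat \<Rightarrow> nat \<Rightarrow> complex mat \<Rightarrow> complex mat" where
  "ptrace_A a b M = mat b b (\<lambda>(x, y). \<Sum>i<a. M $$ (i * b + x, i * b + y))"

definition schmidt_rank :: "nat \<Rightarrow> nat \<Rightarrow> complex vec \<Rightarrow> nat" where
  "schmidt_rank a b v = vec_space.rank b (ptrace_A a b (outer (a * b) v))"

definition schmidt_number :: "nat \<Rightarrow> nat \<Rightarrow> complex mat \<Rightarrow> nat" where
  "schmidt_number a b W = (LEAST k. \<exists>(n::nat) (p :: nat \<Rightarrow> real) (psi :: nat \<Rightarrow> complex vec).
     (\<forall>i<n. p i > 0 \<and> psi i \<in> carrier_vec (a * b) \<and> schmidt_rank a b (psi i) \<le> k) \<and>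
     (\<forall>r < a * b. \<forall>c < a * b.
        W $$ (r, c) = (\<Sum>i<n. complex_of_real (p i) * outer (a * b) (psi i) $$ (r, c))))"

definition block :: "nat \<Rightarrow> complex mat \<Rightarrow> nat \<Rightarrow> nat \<Rightarrow> complex mat" where
  "block d X i j = mat d d (\<lambda>(x, y). X $$ (i * d + x, j * d + y))"

definition block_mat :: "nat \<Rightarrow> nat \<Rightarrow> (nat \<Rightarrow> nat \<Rightarrow> complex mat) \<Rightarrow> complex mat" where
  "block_mat n d B = mat (n * d) (n * d) (\<lambda>(r, c). B (r div d) (c div d) $$ (r mod d, c mod d))"

end

theory Submission
  imports Defs
begin


definition ipf :: "nat \<Rightarrow> (nat \<Rightarrow> complex) \<Rightarrow> (nat \<Rightarrow> complex) \<Rightarrow> complex" where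
  "ipf n u v = (\<Sum>i<n. cnj (u i) * v i)"
definition mvf :: "nat \<Rightarrow> (nat \<Rightarrow> nat \<Rightarrow> complex) \<Rightarrow> (nat \<Rightarrow> complex) \<Rightarrow> nat \<Rightarrow> complex" where
  "mvf n M v = (\<lambda>i. \<Sum>j<n. M i j * v j)"
definition hermf :: "nat \<Rightarrow> (nat \<Rightarrow> nat \<Rightarrow> complex) \<Rightarrow> bool" where
  "hermf n M = (\<forall>i<n. \<forall>j<n. M i j = cnj (M j i))"
definition psdf :: "nat \<Rightarrow> (nat \<Rightarrow> nat \<Rightarrow> complex) \<Rightarrow> bool" where
  "psdf n M = (hermf n M \<and> (\<forall>v. 0 \<le> Re (ipf n v (mvf n M v))))"
definition ek :: "nat \<Rightarrow> nat \<Rightarrow> complex" where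
  "ek k = (\<lambda>i. if i = k then 1 else 0)"

lemma ipf_add2: "ipf n u (\<lambda>i. a i + b i) = ipf n u a + ipf n u b"
  by (simp add: ipf_def distrib_left sum.distrib)
lemma ipf_diff2: "ipf n u (\<lambda>i. a i - b i) = ipf n u a - ipf n u b"
  by (simp add: ipf_def right_diff_distrib sum_subtractf)
lemma ipf_scale2: "ipf n u (\<lambda>i. c * a i) = c * ipf n u a"
  by (simp add: ipf_def sum_distrib_left mult_ac)
lemma ipf_add1: "ipf n (\<lambda>i. a i + b i) v = ipf n a v + ipf n b v"
  by (simp add: ipf_def distrib_right sum.distrib)
lemma ipf_diff1: "ipf n (\<lambda>i. a i - b i) v = ipf n a v - ipf n b v"
  by (simp add: ipf_def left_diff_distrib sum_subtractf)
lemma ipf_scale1: "ipf n (\<lambda>i. c * a i) v = cnj c * ipf n a v"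
  by (simp add: ipf_def sum_distrib_left mult_ac)
lemma ipf_swap: "ipf n u v = cnj (ipf n v u)"
  by (simp add: ipf_def mult_ac)
lemma ipf_ek2: "k < n \<Longrightarrow> ipf n u (ek k) = cnj (u k)"
proof -
  assume k: "k < n"
  have "ipf n u (ek k) = (\<Sum>i<n. if i = k then cnj (u i) else 0)"
    unfolding ipf_def ek_def by (rule sum.cong) auto
  then show ?thesis using k by simp
qed
lemma ipf_ek1: "k < n \<Longrightarrow> ipf n (ek k) v = v k"
proof -
  assume k: "k < n"
  have "ipf n (ek k) v = (\<Sum>i<n. if i = k then v i else 0)"
    unfolding ipf_def ek_def by (rule sum.cong) auto
  then show ?thesis using k by simp
qed
lemma mvf_add: "mvf n M (\<lambda>i. a i + b i) = (\<lambda>i. mvf n M a i + mvf n M b i)"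
  by (simp add: mvf_def distrib_left sum.distrib)
lemma mvf_diff: "mvf n M (\<lambda>i. a i - b i) = (\<lambda>i. mvf n M a i - mvf n M b i)"
  by (simp add: mvf_def right_diff_distrib sum_subtractf)
lemma mvf_scale: "mvf n M (\<lambda>i. c * a i) = (\<lambda>i. c * mvf n M a i)"
  by (simp add: mvf_def sum_distrib_left mult_ac)
lemma mvf_ek: "k < n \<Longrightarrow> mvf n M (ek k) = (\<lambda>i. M i k)"
proof (rule ext)
  fix i assume k: "k < n"
  have "mvf n M (ek k) i = (\<Sum>j<n. if j = k then M i j else 0)"
    unfolding mvf_def ek_def by (rule sum.cong) auto
  then show "mvf n M (ek k) i = M i k" using k by simp
qed
lemma mvf_madd: "mvf n (\<lambda>i j. A i j + B i j) v = (\<lambda>i. mvf n A v i + mvf n B v i)"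
  by (simp add: mvf_def distrib_right sum.distrib)
lemma mvf_rank1: "mvf n (\<lambda>i j. A i j - a i * cnj (b j)) v = (\<lambda>i. mvf n A v i - a i * ipf n b v)"
  by (rule ext) (simp add: mvf_def ipf_def right_diff_distrib sum_subtractf sum_distrib_left algebra_simps)

lemma herm_swap: assumes "hermf n M"
  shows "ipf n u (mvf n M v) = cnj (ipf n v (mvf n M u))"
proof -
  have "ipf n u (mvf n M v) = (\<Sum>i<n. \<Sum>j<n. cnj (u i) * M i j * v j)"
    by (simp add: ipf_def mvf_def sum_distrib_left mult_ac)
  also have "\<dots> = (\<Sum>j<n. \<Sum>i<n. cnj (u i) * M i j * v j)" by (rule sum.swap)
  also have "\<dots> = (\<Sum>j<n. \<Sum>i<n. v j * cnj (M j i) * cnj (u i))"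
  proof (intro sum.cong refl)
    fix j i assume "j \<in> {..<n}" "i \<in> {..<n}"
    then have "M i j = cnj (M j i)" using assms unfolding hermf_def by blast
    then show "cnj (u i) * M i j * v j = v j * cnj (M j i) * cnj (u i)" by (simp add: mult_ac)
  qed
  also have "\<dots> = cnj (ipf n v (mvf n M u))"
    by (simp add: ipf_def mvf_def sum_distrib_left mult_ac)
  finally show ?thesis .
qed

lemma herm_real: "hermf n M \<Longrightarrow> Im (ipf n u (mvf n M u)) = 0"
  using herm_swap[of n M u u] by (metis Reals_cnj_iff complex_is_Real_iff)

lemma psdf_real: "psdf n M \<Longrightarrow> ipf n u (mvf n M u) = complex_of_real (Re (ipf n u (mvf n M u)))"
  using herm_real[of n M u] unfolding psdf_def by (simp add: complex_eq_iff)

lemma quad_expand: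
  "ipf n (\<lambda>i. u i + l * v i) (mvf n M (\<lambda>i. u i + l * v i)) =
   ipf n u (mvf n M u) + l * ipf n u (mvf n M v) + cnj l * ipf n v (mvf n M u)
   + cnj l * l * ipf n v (mvf n M v)"
  by (simp add: mvf_add mvf_scale ipf_add1 ipf_add2 ipf_scale1 ipf_scale2 algebra_simps)

lemma cs_aux:
  fixes a c :: real and b :: complex
  assumes "\<And>l. 0 \<le> a + Re (l * b + cnj l * cnj b) + (cmod l)^2 * c" and "0 \<le> c"
  shows "(cmod b)^2 \<le> a * c"
proof -
  have key: "Re (complex_of_real r * cnj b * b + cnj (complex_of_real r * cnj b) * cnj b) = 2 * r * (cmod b)^2" for r
    using cmod_power2[of b] by (simp add: algebra_simps power2_eq_square)
  have nm: "(cmod (complex_of_real r * cnj b))^2 = r^2 * (cmod b)^2" for r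
    by (simp add: norm_mult power_mult_distrib)
  have h: "0 \<le> a + 2 * r * (cmod b)^2 + r^2 * (cmod b)^2 * c" for r
    using assms(1)[of "complex_of_real r * cnj b"] unfolding key nm .
  show ?thesis
  proof (cases "c > 0")
    case True
    have "0 \<le> a + 2 * (- 1 / c) * (cmod b)^2 + (- 1 / c)^2 * (cmod b)^2 * c" by (rule h)
    also have "(- 1 / c)^2 * (cmod b)^2 * c = (cmod b)^2 / c" using True by (simp add: power2_eq_square)
    finally have "0 \<le> a - (cmod b)^2 / c" by simp
    then show ?thesis using True by (simp add: field_simps)
  next
    case False
    then have c0: "c = 0" using assms(2) by simp
    show ?thesis
    proof (rule ccontr)
      assume "\<not> ?thesis"
      then have bne: "(cmod b)^2 > 0" using c0 by auto
      define t where "t = - (a + 1) / (2 * (cmod b)^2)"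
      have "0 \<le> a + 2 * t * (cmod b)^2" using h[of t] c0 by simp
      also have "2 * t * (cmod b)^2 = - (a + 1)" using bne by (simp add: t_def)
      finally show False by simp
    qed
  qed
qed

lemma cs: assumes "psdf n M"
  shows "(cmod (ipf n u (mvf n M v)))^2 \<le> Re (ipf n u (mvf n M u)) * Re (ipf n v (mvf n M v))"
proof (rule cs_aux)
  show "0 \<le> Re (ipf n v (mvf n M v))" using assms unfolding psdf_def by blast
  fix l
  define r where "r = Re (ipf n v (mvf n M v))"
  have h0: "0 \<le> Re (ipf n (\<lambda>i. u i + l * v i) (mvf n M (\<lambda>i. u i + l * v i)))"
    using assms unfolding psdf_def by blast
  have e: "ipf n v (mvf n M u) = cnj (ipf n u (mvf n M v))"
    using herm_swap[of n M v u] assms unfolding psdf_def by blast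
  have qv: "ipf n v (mvf n M v) = complex_of_real r"
    unfolding r_def by (rule psdf_real[OF assms])
  have ll: "cnj l * l = complex_of_real ((cmod l)^2)"
    by (subst complex_norm_square) (rule mult.commute)
  have h1: "ipf n (\<lambda>i. u i + l * v i) (mvf n M (\<lambda>i. u i + l * v i)) =
   ipf n u (mvf n M u) + (l * ipf n u (mvf n M v) + cnj l * cnj (ipf n u (mvf n M v)))
   + complex_of_real ((cmod l)^2) * complex_of_real r"
    unfolding quad_expand e qv ll[symmetric] by (simp add: algebra_simps)
  show "0 \<le> Re (ipf n u (mvf n M u)) + Re (l * ipf n u (mvf n M v) + cnj l * cnj (ipf n u (mvf n M v))) +
         (cmod l)\<^sup>2 * Re (ipf n v (mvf n M v))"
    using h0 unfolding h1 r_def[symmetric] by (simp only: plus_complex.sel(1) of_real_mult[symmetric] Re_complex_of_real)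
qed



lemma quad_ek: "k < n \<Longrightarrow> ipf n (ek k) (mvf n M (ek k)) = M k k"
  by (simp add: mvf_ek ipf_ek1)

lemma psdf_diag: assumes "psdf n M" "k < n"
  shows "M k k = complex_of_real (Re (M k k))" "0 \<le> Re (M k k)"
  using psdf_real[OF assms(1), of "ek k"] assms(1) quad_ek[OF assms(2), of M]
  unfolding psdf_def by metis+

lemma zero_pivot: assumes psd: "psdf n M" and k: "k < n" and i: "i < n" and z: "M k k = 0"
  shows "M i k = 0" "M k i = 0"
proof -
  have "(cmod (ipf n (ek i) (mvf n M (ek k))))^2 \<le> Re (ipf n (ek i) (mvf n M (ek i))) * Re (ipf n (ek k) (mvf n M (ek k)))"
    by (rule cs[OF psd])
  then have "(cmod (M i k))^2 \<le> 0" using z i k by (simp add: quad_ek mvf_ek ipf_ek1)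
  then show "M i k = 0" by simp
  then show "M k i = 0" using psd i k unfolding psdf_def hermf_def by (metis complex_cnj_zero)
qed

lemma quad_rank1: "ipf n u (mvf n (\<lambda>i j. A i j - a i * cnj (b j)) u) = ipf n u (mvf n A u) - ipf n u a * ipf n b u"
  unfolding mvf_rank1 ipf_diff2 by (subst mult.commute) (simp add: ipf_scale2)

lemma hermf_rank1: "hermf n A \<Longrightarrow> hermf n (\<lambda>i j. A i j - a i * cnj (a j))"
  unfolding hermf_def by (metis complex_cnj_cnj complex_cnj_diff complex_cnj_mult mult.commute)

lemma pivot_update:
  assumes psd: "psdf n M" and k: "k < n" and nz: "M k k \<noteq> 0"
    and lz: "\<forall>i<n. \<forall>j<n. (i < k \<or> j < k) \<longrightarrow> M i j = 0"
  defines "s \<equiv> sqrt (Re (M k k))"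
  defines "c \<equiv> (\<lambda>i. M i k / complex_of_real s)"
  shows "s > 0" "M k k = complex_of_real s * complex_of_real s"
    "\<And>u. ipf n c u = mvf n M u k / complex_of_real s"
    "psdf n (\<lambda>i j. M i j - c i * cnj (c j))"
    "\<forall>i<n. \<forall>j<n. (i < Suc k \<or> j < Suc k) \<longrightarrow> M i j - c i * cnj (c j) = 0"
proof -
  have d1: "M k k = complex_of_real (Re (M k k))" and d2: "0 \<le> Re (M k k)"
    using psdf_diag[OF psd k] by auto
  have rpos: "Re (M k k) > 0" using d1 d2 nz by (metis less_eq_real_def of_real_0)
  then show spos: "s > 0" unfolding s_def by simp
  have ss: "s * s = Re (M k k)" unfolding s_def using rpos by simp
  show mkk: "M k k = complex_of_real s * complex_of_real s"
    using d1 ss by (metis of_real_mult)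
  have herm: "\<And>i j. i < n \<Longrightarrow> j < n \<Longrightarrow> M i j = cnj (M j i)"
    using psd unfolding psdf_def hermf_def by blast
  show ipc: "ipf n c u = mvf n M u k / complex_of_real s" for u
  proof -
    have "ipf n c u = (\<Sum>i<n. M k i * u i / complex_of_real s)"
      unfolding ipf_def c_def by (rule sum.cong) (auto simp: herm[OF k])
    then show ?thesis by (simp add: mvf_def sum_divide_distrib)
  qed
  show "psdf n (\<lambda>i j. M i j - c i * cnj (c j))"
    unfolding psdf_def
  proof (intro conjI allI)
    show "hermf n (\<lambda>i j. M i j - c i * cnj (c j))"
      using hermf_rank1 psd unfolding psdf_def by blast
    fix u
    define m where "m = mvf n M u k"
    have q: "ipf n u (mvf n (\<lambda>i j. M i j - c i * cnj (c j)) u) = ipf n u (mvf n M u) - cnj (m / complex_of_real s) * (m / complex_of_real s)"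
      unfolding quad_rank1 ipc m_def by (subst ipf_swap) (simp add: ipc)
    have "(cmod (ipf n (ek k) (mvf n M u)))^2 \<le> Re (ipf n (ek k) (mvf n M (ek k))) * Re (ipf n u (mvf n M u))"
      by (rule cs[OF psd])
    then have cs1: "(cmod m)^2 \<le> s * s * Re (ipf n u (mvf n M u))"
      using k ss by (simp add: mvf_ek ipf_ek1 m_def)
    have "Re (cnj (m / complex_of_real s) * (m / complex_of_real s)) = (cmod m)^2 / (s * s)"
      using cmod_power2[of m] by (simp add: Re_divide power2_eq_square)
    also have "\<dots> \<le> Re (ipf n u (mvf n M u))" using cs1 spos by (simp add: divide_le_eq mult_ac)
    finally show "0 \<le> Re (ipf n u (mvf n (\<lambda>i j. M i j - c i * cnj (c j)) u))"
      unfolding q by simp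
  qed
  show "\<forall>i<n. \<forall>j<n. (i < Suc k \<or> j < Suc k) \<longrightarrow> M i j - c i * cnj (c j) = 0"
  proof (intro allI impI)
    fix i j assume ij: "i < n" "j < n" and "i < Suc k \<or> j < Suc k"
    then consider "i < k" | "j < k" | "i = k" | "j = k" by linarith
    then show "M i j - c i * cnj (c j) = 0"
    proof cases
      case 1 then show ?thesis using lz ij k by (simp add: c_def)
    next
      case 2 then show ?thesis using lz ij k by (simp add: c_def)
    next
      case 3
      have S0: "complex_of_real s \<noteq> 0" using spos by simp
      have "cnj (c j) = M k j / complex_of_real s"
        unfolding c_def using herm[OF k ij(2)] by simp
      moreover have "c k = complex_of_real s" unfolding c_def mkk using S0 by simp
      ultimately show ?thesis using 3 S0 by simp
    next
      case 4
      have S0: "complex_of_real s \<noteq> 0" using spos by simp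
      have "c k = complex_of_real s" unfolding c_def mkk using S0 by simp
      then have "cnj (c k) = complex_of_real s" by simp
      moreover have "c i = M i k / complex_of_real s" unfolding c_def ..
      ultimately show ?thesis using 4 S0 by simp
    qed
  qed
qed



lemma lz_step:
  assumes psd: "psdf n M" and k: "k < n" and z: "M k k = 0"
    and lz: "\<forall>i<n. \<forall>j<n. (i < k \<or> j < k) \<longrightarrow> M i j = 0"
  shows "\<forall>i<n. \<forall>j<n. (i < Suc k \<or> j < Suc k) \<longrightarrow> M i j = 0"
proof (intro allI impI)
  fix i j assume ij: "i < n" "j < n" "i < Suc k \<or> j < Suc k"
  then consider "i < k \<or> j < k" | "i = k" | "j = k" by linarith
  then show "M i j = 0"
  proof cases
    case 1 then show ?thesis using lz ij by blast
  next
    case 2 then show ?thesis using zero_pivot(2)[OF psd k ij(2) z] by simp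
  next
    case 3 then show ?thesis using zero_pivot(1)[OF psd k ij(1) z] by simp
  qed
qed

lemma chol_aux: "n - k = m \<Longrightarrow> psdf n M \<Longrightarrow> (\<forall>i<n. \<forall>j<n. (i < k \<or> j < k) \<longrightarrow> M i j = 0) \<Longrightarrow>
  \<exists>us. \<forall>i<n. \<forall>j<n. M i j = (\<Sum>u\<leftarrow>us. u i * cnj (u j))"
proof (induction m arbitrary: k M)
  case 0
  then have "\<forall>i<n. \<forall>j<n. M i j = 0" by auto
  then show ?case by (intro exI[of _ "[]"]) simp
next
  case (Suc m)
  then have k: "k < n" by simp
  have nk: "n - Suc k = m" using Suc.prems(1) by simp
  show ?case
  proof (cases "M k k = 0")
    case True
    show ?thesis using Suc.IH[OF nk Suc.prems(2) lz_step[OF Suc.prems(2) k True Suc.prems(3)]] .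
  next
    case False
    define c where "c = (\<lambda>i. M i k / complex_of_real (sqrt (Re (M k k))))"
    note pu = pivot_update[OF Suc.prems(2) k False Suc.prems(3)]
    have pu4: "psdf n (\<lambda>i j. M i j - c i * cnj (c j))" using pu(4) unfolding c_def .
    have pu5: "\<forall>i<n. \<forall>j<n. (i < Suc k \<or> j < Suc k) \<longrightarrow> M i j - c i * cnj (c j) = 0"
      using pu(5) unfolding c_def .
    obtain us where us: "\<forall>i<n. \<forall>j<n. M i j - c i * cnj (c j) = (\<Sum>u\<leftarrow>us. u i * cnj (u j))"
      using Suc.IH[OF nk pu4 pu5] by blast
    show ?thesis
    proof (intro exI[of _ "c # us"] allI impI)
      fix i j assume "i < n" "j < n"
      then have "M i j - c i * cnj (c j) = (\<Sum>u\<leftarrow>us. u i * cnj (u j))" using us by blast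
      then show "M i j = (\<Sum>u\<leftarrow>c # us. u i * cnj (u j))" by (simp add: algebra_simps)
    qed
  qed
qed

lemma chol: "psdf n M \<Longrightarrow> \<exists>us. \<forall>i<n. \<forall>j<n. M i j = (\<Sum>u\<leftarrow>us. u i * cnj (u j))"
  using chol_aux[of n 0 n M] by simp

lemma range_aux: "n - k = m \<Longrightarrow> psdf n Y \<Longrightarrow> (\<forall>u. (cmod (ipf n u w))^2 \<le> Re (ipf n u (mvf n Y u))) \<Longrightarrow>
  (\<forall>i<n. \<forall>j<n. (i < k \<or> j < k) \<longrightarrow> Y i j = 0) \<Longrightarrow> \<exists>z. \<forall>i<n. mvf n Y z i = w i"
proof (induction m arbitrary: k Y w)
  case 0
  then have Y0: "\<forall>i<n. \<forall>j<n. Y i j = 0" by auto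
  show ?case
  proof (intro exI[of _ "\<lambda>_. 0"] allI impI)
    fix i assume i: "i < n"
    have "(cmod (ipf n (ek i) w))^2 \<le> Re (ipf n (ek i) (mvf n Y (ek i)))" using 0 by blast
    then have "(cmod (w i))^2 \<le> 0" using i Y0 by (simp add: ipf_ek1 mvf_ek)
    then show "mvf n Y (\<lambda>_. 0) i = w i" by (simp add: mvf_def)
  qed
next
  case (Suc m)
  then have k: "k < n" by simp
  have nk: "n - Suc k = m" using Suc.prems(1) by simp
  have psd: "psdf n Y" by (rule Suc.prems(2))
  have herm: "hermf n Y" using psd unfolding psdf_def by blast
  show ?case
  proof (cases "Y k k = 0")
    case True
    show ?thesis using Suc.IH[OF nk Suc.prems(2) Suc.prems(3) lz_step[OF Suc.prems(2) k True Suc.prems(4)]] .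
  next
    case False
    define s where "s = sqrt (Re (Y k k))"
    define S where "S = complex_of_real s"
    define c where "c = (\<lambda>i. Y i k / S)"
    note pu = pivot_update[OF psd k False Suc.prems(4), folded s_def, folded S_def]
    define Y' where "Y' = (\<lambda>i j. Y i j - c i * cnj (c j))"
    have pu4: "psdf n Y'" using pu(4) unfolding Y'_def c_def .
    have pu5: "\<forall>i<n. \<forall>j<n. (i < Suc k \<or> j < Suc k) \<longrightarrow> Y' i j = 0"
      using pu(5) unfolding Y'_def c_def .
    have pu3: "ipf n c u = mvf n Y u k / S" for u using pu(3) unfolding c_def .
    have S0: "S \<noteq> 0" using pu(1) by (simp add: S_def)
    have cS: "cnj S = S" by (simp add: S_def)
    define w' where "w' = (\<lambda>i. w i - (w k / S) * c i)"
    have hyp: "\<forall>u. (cmod (ipf n u w'))^2 \<le> Re (ipf n u (mvf n Y' u))"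
    proof
      fix u
      define m where "m = mvf n Y u k"
      define t where "t = m / (S * S)"
      define u' where "u' = (\<lambda>i. u i + (- t) * ek k i)"
      have e1: "ipf n u' w = ipf n u w + cnj (- t) * w k"
        unfolding u'_def ipf_add1 ipf_scale1 ipf_ek1[OF k] ..
      have e2: "ipf n u w' = ipf n u w - (w k / S) * cnj (m / S)"
        unfolding w'_def ipf_diff2 ipf_scale2 by (subst ipf_swap) (simp add: pu3 m_def)
      have e12: "ipf n u w' = ipf n u' w"
        unfolding e1 e2 t_def using cS by (simp add: field_simps)
      have h1: "ipf n u (mvf n Y (ek k)) = cnj m"
        using herm_swap[OF herm, of u "ek k"] by (simp add: ipf_ek1[OF k] m_def)
      have h2: "ipf n (ek k) (mvf n Y u) = m" by (simp add: ipf_ek1[OF k] m_def)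
      have h3: "ipf n (ek k) (mvf n Y (ek k)) = S * S" using quad_ek[OF k] pu(2) by (simp add: S_def)
      have e3: "ipf n u' (mvf n Y u') = ipf n u (mvf n Y' u)"
        unfolding u'_def quad_expand Y'_def quad_rank1 h1 h2 h3
        using S0 cS by (subst ipf_swap) (simp add: pu3 m_def[symmetric] t_def field_simps)
      have "(cmod (ipf n u' w))^2 \<le> Re (ipf n u' (mvf n Y u'))" using Suc.prems(3) by blast
      then show "(cmod (ipf n u w'))^2 \<le> Re (ipf n u (mvf n Y' u))" unfolding e12 e3 .
    qed
    obtain z' where z': "\<forall>i<n. mvf n Y' z' i = w' i"
      using Suc.IH[OF nk pu4 hyp pu5] by blast
    define d where "d = (w k - mvf n Y z' k) / (S * S)"
    show ?thesis
    proof (intro exI[of _ "\<lambda>i. z' i + d * ek k i"] allI impI)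
      fix i assume i: "i < n"
      have a: "mvf n Y (\<lambda>i. z' i + d * ek k i) i = mvf n Y z' i + d * Y i k"
        by (simp add: mvf_add mvf_scale mvf_ek[OF k])
      have "mvf n Y' z' i = mvf n Y z' i - c i * (mvf n Y z' k / S)"
        unfolding Y'_def mvf_rank1 pu3 ..
      then have b: "mvf n Y z' i = w i - (w k / S) * (Y i k / S) + (Y i k / S) * (mvf n Y z' k / S)"
        using z' i unfolding w'_def c_def by (simp add: algebra_simps)
      show "mvf n Y (\<lambda>i. z' i + d * ek k i) i = w i"
        unfolding a unfolding b unfolding d_def using S0 by (simp add: field_simps)
    qed
  qed
qed

lemma range_lemma: "psdf n Y \<Longrightarrow> (\<forall>u. (cmod (ipf n u w))^2 \<le> Re (ipf n u (mvf n Y u))) \<Longrightarrow> \<exists>z. \<forall>i<n. mvf n Y z i = w i"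
  using range_aux[of n 0 n Y w] by simp



lemma sum_zext: "(n::nat) \<le> N \<Longrightarrow> (\<Sum>i<N. if i < n then f i else 0) = (\<Sum>i<n. (f i :: complex))"
proof -
  assume "n \<le> N"
  then have "{..<N} \<inter> {i. i < n} = {..<n}" by auto
  then show ?thesis by (simp add: sum.If_cases)
qed

lemma ipf_cong: "(\<And>i. i < n \<Longrightarrow> f i = g i) \<Longrightarrow> ipf n u f = ipf n u g"
  unfolding ipf_def by (rule sum.cong) auto

lemma mvf_zext: "n \<le> N \<Longrightarrow> mvf N X (\<lambda>i. if i < n then z i else 0) = mvf n X z"
proof (rule ext)
  fix i assume nN: "n \<le> N"
  have "(\<Sum>j<N. X i j * (if j < n then z j else 0)) = (\<Sum>j<N. if j < n then X i j * z j else 0)"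
    by (rule sum.cong) auto
  then show "mvf N X (\<lambda>i. if i < n then z i else 0) i = mvf n X z i"
    unfolding mvf_def by (rule trans[OF _ sum_zext[OF nN]])
qed

lemma ipf_zext: "n \<le> N \<Longrightarrow> ipf N (\<lambda>i. if i < n then z i else 0) f = ipf n z f"
proof -
  assume nN: "n \<le> N"
  have "(\<Sum>j<N. cnj (if j < n then z j else 0) * f j) = (\<Sum>j<N. if j < n then cnj (z j) * f j else 0)"
    by (rule sum.cong) auto
  then show ?thesis unfolding ipf_def by (rule trans[OF _ sum_zext[OF nN]])
qed

lemma psdf_restrict: assumes "psdf N X" "n \<le> N" shows "psdf n X"
  unfolding psdf_def
proof (intro conjI allI)
  show "hermf n X" using assms unfolding psdf_def hermf_def by (meson order_less_le_trans)
  fix v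
  have "0 \<le> Re (ipf N (\<lambda>i. if i < n then v i else 0) (mvf N X (\<lambda>i. if i < n then v i else 0)))"
    using assms(1) unfolding psdf_def by blast
  then show "0 \<le> Re (ipf n v (mvf n X v))" using assms(2) by (simp add: mvf_zext ipf_zext)
qed

lemma psdf_cong: assumes "psdf n M" "\<forall>i<n. \<forall>j<n. M i j = M' i j" shows "psdf n M'"
  unfolding psdf_def
proof (intro conjI allI)
  show "hermf n M'" unfolding hermf_def
  proof (intro allI impI)
    fix i j assume "i < n" "j < n"
    then have "M i j = cnj (M j i)" "M i j = M' i j" "M j i = M' j i"
      using assms unfolding psdf_def hermf_def by blast+
    then show "M' i j = cnj (M' j i)" by metis
  qed
  fix v
  have "ipf n v (mvf n M' v) = ipf n v (mvf n M v)"
    by (rule ipf_cong) (use assms(2) in \<open>simp add: mvf_def\<close>)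
  then show "0 \<le> Re (ipf n v (mvf n M' v))" using assms(1) unfolding psdf_def by simp
qed

lemma psdf_add: assumes "psdf n A" "psdf n B" shows "psdf n (\<lambda>i j. A i j + B i j)"
  unfolding psdf_def
proof (intro conjI allI)
  show "hermf n (\<lambda>i j. A i j + B i j)" using assms unfolding psdf_def hermf_def by (metis complex_cnj_add)
  fix v
  show "0 \<le> Re (ipf n v (mvf n (\<lambda>i j. A i j + B i j) v))"
    using assms unfolding psdf_def by (simp add: mvf_madd ipf_add2)
qed

lemma norm_sq_c: "x * cnj x = complex_of_real ((cmod x)^2)"
  by (metis complex_norm_square of_real_power)

lemma quad_minus_rank1_re:
  "Re (ipf n u (mvf n (\<lambda>i j. A i j - a i * cnj (a j)) u)) = Re (ipf n u (mvf n A u)) - (cmod (ipf n u a))^2"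
  unfolding quad_rank1 by (subst (2) ipf_swap) (simp only: norm_sq_c minus_complex.sel Re_complex_of_real)

lemma psdf_rank1: "psdf n (\<lambda>i j. a i * cnj (a j))"
  unfolding psdf_def
proof (intro conjI allI)
  show "hermf n (\<lambda>i j. a i * cnj (a j))" unfolding hermf_def by simp
  fix v
  have "mvf n (\<lambda>i j. a i * cnj (a j)) v = (\<lambda>i. ipf n a v * a i)"
    by (rule ext) (simp add: mvf_def ipf_def sum_distrib_left mult_ac)
  then have "ipf n v (mvf n (\<lambda>i j. a i * cnj (a j)) v) = ipf n a v * ipf n v a"
    by (simp add: ipf_scale2)
  also have "\<dots> = complex_of_real ((cmod (ipf n a v))^2)"
    by (subst (2) ipf_swap) (rule norm_sq_c)
  finally show "0 \<le> Re (ipf n v (mvf n (\<lambda>i j. a i * cnj (a j)) v))" by simp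
qed

lemma psdf_zero: "psdf n (\<lambda>i j. 0)"
  unfolding psdf_def hermf_def by (simp add: mvf_def ipf_def)

lemma psdf_sum_rank1: "psdf n (\<lambda>i j. \<Sum>u\<leftarrow>us. u i * cnj (u j))"
proof (induction us)
  case Nil then show ?case using psdf_zero by simp
next
  case (Cons a us)
  then show ?case using psdf_add[OF psdf_rank1[of n a] Cons] by simp
qed

lemma peel: assumes psd: "psdf N X" and nN: "n \<le> N" and pw: "psdf n (\<lambda>i j. X i j - w i * cnj (w j))"
  shows "\<exists>v. (\<forall>r<n. v r = w r) \<and> psdf N (\<lambda>i j. X i j - v i * cnj (v j))"
proof -
  have Y: "psdf n X" by (rule psdf_restrict[OF psd nN])
  have hyp: "\<forall>u. (cmod (ipf n u w))^2 \<le> Re (ipf n u (mvf n X u))"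
  proof
    fix u
    have "0 \<le> Re (ipf n u (mvf n (\<lambda>i j. X i j - w i * cnj (w j)) u))" using pw unfolding psdf_def by blast
    then show "(cmod (ipf n u w))^2 \<le> Re (ipf n u (mvf n X u))" unfolding quad_minus_rank1_re by simp
  qed
  obtain z where z: "\<forall>i<n. mvf n X z i = w i" using range_lemma[OF Y hyp] by blast
  define z' where "z' = (\<lambda>i. if i < n then z i else 0)"
  define v where "v = mvf N X z'"
  have vz: "v = mvf n X z" unfolding v_def z'_def by (rule mvf_zext[OF nN])
  have zw: "ipf n z (mvf n X z) = ipf n z w" by (rule ipf_cong) (use z in simp)
  have qz: "ipf N z' (mvf N X z') = ipf n z w"
    unfolding v_def[symmetric] vz unfolding z'_def ipf_zext[OF nN] by (rule zw)
  define q where "q = ipf n z w"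
  have qr1: "q = complex_of_real (Re q)" unfolding q_def zw[symmetric] by (rule psdf_real[OF Y])
  have qr2: "0 \<le> Re q" using Y unfolding psdf_def q_def zw[symmetric] by blast
  have "(cmod (ipf n z w))^2 \<le> Re (ipf n z (mvf n X z))" using hyp by blast
  then have "(cmod q)^2 \<le> Re q" unfolding q_def zw .
  moreover have "cmod q = Re q" using qr1 qr2 by (metis norm_of_real abs_of_nonneg)
  ultimately have "Re q * Re q \<le> Re q * 1" by (simp add: power2_eq_square)
  then have q1: "Re q \<le> 1" using qr2
    by (metis less_eq_real_def mult_le_cancel_left_pos order.refl zero_le_one)
  have qr: "0 \<le> Re q" by (rule qr2)
  show ?thesis
  proof (intro exI conjI allI impI)
    fix r assume "r < n" then show "v r = w r" using z vz by simp
  next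
    show "psdf N (\<lambda>i j. X i j - v i * cnj (v j))"
      unfolding psdf_def
    proof (intro conjI allI)
      show "hermf N (\<lambda>i j. X i j - v i * cnj (v j))" using hermf_rank1 psd unfolding psdf_def by blast
      fix u
      have "(cmod (ipf N u v))^2 \<le> Re (ipf N u (mvf N X u)) * Re (ipf N z' (mvf N X z'))"
        unfolding v_def by (rule cs[OF psd])
      also have "\<dots> \<le> Re (ipf N u (mvf N X u))"
        using q1 qr psd unfolding qz q_def[symmetric] psdf_def by (simp add: mult_left_le)
      finally show "0 \<le> Re (ipf N u (mvf N (\<lambda>i j. X i j - v i * cnj (v j)) u))"
        unfolding quad_minus_rank1_re by simp
    qed
  qed
qed



lemma lift: "psdf N X \<Longrightarrow> n \<le> N \<Longrightarrow> (\<forall>r<n. \<forall>c<n. X r c = (\<Sum>w\<leftarrow>ws. w r * cnj (w c))) \<Longrightarrow>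
  \<exists>vs. list_all2 (\<lambda>v w. \<forall>r<n. v r = w r) vs ws \<and> psdf N (\<lambda>r c. X r c - (\<Sum>v\<leftarrow>vs. v r * cnj (v c)))"
proof (induction ws arbitrary: X)
  case Nil
  then show ?case by (intro exI[of _ "[]"]) simp
next
  case (Cons w ws)
  have pw: "psdf n (\<lambda>i j. X i j - w i * cnj (w j))"
    by (rule psdf_cong[OF psdf_sum_rank1[of n ws]]) (use Cons.prems(3) in simp)
  obtain v where v: "\<forall>r<n. v r = w r" "psdf N (\<lambda>i j. X i j - v i * cnj (v j))"
    using peel[OF Cons.prems(1,2) pw] by blast
  have top: "\<forall>r<n. \<forall>c<n. X r c - v r * cnj (v c) = (\<Sum>w\<leftarrow>ws. w r * cnj (w c))"
    using Cons.prems(3) v(1) by simp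
  obtain vs where vs: "list_all2 (\<lambda>v w. \<forall>r<n. v r = w r) vs ws"
    "psdf N (\<lambda>r c. (X r c - v r * cnj (v c)) - (\<Sum>v\<leftarrow>vs. v r * cnj (v c)))"
    using Cons.IH[OF v(2) Cons.prems(2) top] by blast
  show ?case
  proof (intro exI[of _ "v # vs"] conjI)
    show "list_all2 (\<lambda>v w. \<forall>r<n. v r = w r) (v # vs) (w # ws)" using vs(1) v(1) by simp
    show "psdf N (\<lambda>r c. X r c - (\<Sum>v\<leftarrow>v # vs. v r * cnj (v c)))"
      using vs(2) by (simp add: algebra_simps)
  qed
qed

lemma top_eq: "list_all2 (\<lambda>v w. \<forall>r<n. v r = w r) vs ws \<Longrightarrow> r < n \<Longrightarrow> c < n \<Longrightarrow>
  (\<Sum>v\<leftarrow>vs. v r * cnj (v c)) = (\<Sum>w\<leftarrow>ws. w r * cnj (w c))"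
  by (induction rule: list_all2_induct) auto

lemma sum_sq_real: "(\<Sum>u\<leftarrow>us. u r * cnj (u r)) = complex_of_real (\<Sum>u\<leftarrow>us. (cmod (u r))^2)"
  by (induction us) (auto simp: norm_sq_c)

lemma decomp: assumes "psdf N X" "n \<le> N" "\<forall>r<n. \<forall>c<n. X r c = (\<Sum>w\<leftarrow>ws. w r * cnj (w c))"
  shows "\<exists>vs us. list_all2 (\<lambda>v w. \<forall>r<n. v r = w r) vs ws \<and> (\<forall>u\<in>set us. \<forall>r<n. u r = 0) \<and>
     (\<forall>r<N. \<forall>c<N. X r c = (\<Sum>x\<leftarrow>vs @ us. x r * cnj (x c)))"
proof -
  obtain vs where vs: "list_all2 (\<lambda>v w. \<forall>r<n. v r = w r) vs ws"
    "psdf N (\<lambda>r c. X r c - (\<Sum>v\<leftarrow>vs. v r * cnj (v c)))"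
    using lift[OF assms] by blast
  obtain us where us: "\<forall>i<N. \<forall>j<N. X i j - (\<Sum>v\<leftarrow>vs. v i * cnj (v j)) = (\<Sum>u\<leftarrow>us. u i * cnj (u j))"
    using chol[OF vs(2)] by blast
  show ?thesis
  proof (intro exI conjI ballI allI impI)
    show "list_all2 (\<lambda>v w. \<forall>r<n. v r = w r) vs ws" by (rule vs(1))
  next
    fix u r assume u: "u \<in> set us" and r: "r < n"
    have "(\<Sum>u\<leftarrow>us. u r * cnj (u r)) = X r r - (\<Sum>v\<leftarrow>vs. v r * cnj (v r))"
      using us r assms(2) by simp
    also have "\<dots> = 0" using top_eq[OF vs(1) r r] assms(3) r by simp
    finally have "(\<Sum>u\<leftarrow>us. (cmod (u r))^2) = 0" unfolding sum_sq_real by simp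
    then have "\<forall>x\<in>set (map (\<lambda>u. (cmod (u r))^2) us). x = 0"
      by (subst sum_list_nonneg_eq_0_iff[symmetric]) auto
    then show "u r = 0" using u by simp
  next
    fix r c assume "r < N" "c < N"
    then show "X r c = (\<Sum>x\<leftarrow>vs @ us. x r * cnj (x c))" using us by (simp add: algebra_simps)
  qed
qed



lemma rank_sum_products:
  "vec_space.rank b (mat b b (\<lambda>(x, y). \<Sum>i<k. f i x * g i y :: complex)) \<le> k"
proof (induction k)
  case 0
  have z0: "mat b b (\<lambda>(x, y). \<Sum>i<0. f i x * g i y :: complex) = 0\<^sub>m b b"
    by (rule eq_matI) auto
  show ?case unfolding z0 vec_space.rank_0I by simp
next
  case (Suc k)
  have e: "mat b b (\<lambda>(x, y). \<Sum>i<Suc k. f i x * g i y :: complex) =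
    mat b b (\<lambda>(x, y). \<Sum>i<k. f i x * g i y) + mat b b (\<lambda>(x, y). f k x * g k y)"
    by (rule eq_matI) auto
  have "vec_space.rank b (mat b b (\<lambda>(x, y). \<Sum>i<k. f i x * g i y) + mat b b (\<lambda>(x, y). f k x * g k y))
     \<le> vec_space.rank b (mat b b (\<lambda>(x, y). \<Sum>i<k. f i x * g i y)) + vec_space.rank b (mat b b (\<lambda>(x, y). f k x * g k y))"
    by (rule vec_space.rank_subadditive) auto
  moreover have "vec_space.rank b (mat b b (\<lambda>(x, y). f k x * g k y :: complex)) \<le> 1"
    by (rule vec_space.rank_le_1_product_entries[of _ b b]) auto
  ultimately show ?case using Suc.IH unfolding e by simp
qed

lemma schmidt_bound:
  assumes a: "2 \<le> a" and v: "\<forall>x<b. v x = al * y x \<and> v (b + x) = be * y x"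
  shows "schmidt_rank a b (vec (a * b) v) \<le> a - 1"
proof -
  obtain a' where a': "a = Suc (Suc a')" using a by (metis add_2_eq_Suc le_Suc_ex)
  define F where "F = (\<lambda>i x. if i = 0 then (al * cnj al + be * cnj be) * y x else v ((i + 1) * b + x))"
  define G where "G = (\<lambda>i x. if i = 0 then cnj (y x) else cnj (v ((i + 1) * b + x)))"
  have "ptrace_A a b (outer (a * b) (vec (a * b) v)) = mat b b (\<lambda>(x, y). \<Sum>i<Suc a'. F i x * G i y)"
  proof (rule eq_matI)
    fix x z assume xz: "x < dim_row (mat b b (\<lambda>(x, y). \<Sum>i<Suc a'. F i x * G i y))"
      "z < dim_col (mat b b (\<lambda>(x, y). \<Sum>i<Suc a'. F i x * G i y))"
    then have x: "x < b" and z: "z < b" by auto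
    have idx: "i * b + t < a * b" if "i < a" "t < b" for i t :: nat
    proof -
      have "(i + 1) * b \<le> a * b" using that by (intro mult_le_mono1) simp
      then show ?thesis using that by simp
    qed
    have "ptrace_A a b (outer (a * b) (vec (a * b) v)) $$ (x, z) = (\<Sum>i<a. outer (a * b) (vec (a * b) v) $$ (i * b + x, i * b + z))"
      unfolding ptrace_A_def using x z by simp
    also have "\<dots> = (\<Sum>i<a. v (i * b + x) * cnj (v (i * b + z)))"
      by (rule sum.cong) (auto simp: outer_def idx x z)
    also have "\<dots> = (\<Sum>i<Suc a'. F i x * G i z)"
    proof -
      have vv: "v x = al * y x" "v (b + x) = be * y x" "v z = al * y z" "v (b + z) = be * y z"
        using v x z by auto
      show ?thesis unfolding a' sum.lessThan_Suc_shift
        by (simp add: F_def G_def vv) (simp add: algebra_simps)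
    qed
    finally show "ptrace_A a b (outer (a * b) (vec (a * b) v)) $$ (x, z) =
       mat b b (\<lambda>(x, y). \<Sum>i<Suc a'. F i x * G i y) $$ (x, z)" using x z by simp
  qed (auto simp: ptrace_A_def)
  then show ?thesis unfolding schmidt_rank_def using rank_sum_products[where b=b and k="Suc a'" and f=F and g=G] a' by simp
qed



lemma psd_to_psdf: assumes "psd n A" shows "psdf n (\<lambda>i j. A $$ (i, j))"
  unfolding psdf_def hermf_def
proof (intro conjI allI impI)
  fix i j assume "i < n" "j < n"
  then show "A $$ (i, j) = cnj (A $$ (j, i))" using assms unfolding psd_def hermitian_def by blast
next
  fix v
  have e: "ipf n v (mvf n (\<lambda>i j. A $$ (i, j)) v) = (\<Sum>i<n. \<Sum>j<n. cnj (vec n v $ i) * A $$ (i, j) * vec n v $ j)"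
    unfolding ipf_def mvf_def sum_distrib_left by (intro sum.cong refl) (simp add: mult_ac)
  have c: "vec n v \<in> carrier_vec n" by simp
  have "\<forall>w \<in> carrier_vec n. 0 \<le> Re (\<Sum>i<n. \<Sum>j<n. cnj (w $ i) * A $$ (i, j) * w $ j)"
    using assms unfolding psd_def by blast
  then show "0 \<le> Re (ipf n v (mvf n (\<lambda>i j. A $$ (i, j)) v))"
    unfolding e using c by blast
qed

lemma psdf_to_psd: assumes "A \<in> carrier_mat n n" "psdf n (\<lambda>i j. A $$ (i, j))" shows "psd n A"
  unfolding psd_def hermitian_def
proof (intro conjI ballI allI impI)
  show "A \<in> carrier_mat n n" by (rule assms(1))
  fix i j assume "i < n" "j < n"
  then show "A $$ (i, j) = cnj (A $$ (j, i))" using assms unfolding psdf_def hermf_def by blast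
next
  fix v :: "complex vec" assume "v \<in> carrier_vec n"
  have "(\<Sum>i<n. \<Sum>j<n. cnj (v $ i) * A $$ (i, j) * v $ j) = ipf n (\<lambda>i. v $ i) (mvf n (\<lambda>i j. A $$ (i, j)) (\<lambda>i. v $ i))"
    unfolding ipf_def mvf_def by (simp add: sum_distrib_left mult_ac)
  then show "0 \<le> Re (\<Sum>i<n. \<Sum>j<n. cnj (v $ i) * A $$ (i, j) * v $ j)"
    using assms(2) unfolding psdf_def by simp
qed

lemma hl1: "(\<Sum>x\<leftarrow>concat xss. f x) = (\<Sum>xs\<leftarrow>xss. \<Sum>x\<leftarrow>xs. (f x :: complex))"
  by (induction xss) auto

lemma hl2: "(\<Sum>p\<leftarrow>ps. \<Sum>q\<leftarrow>qs. f p * g q) = (\<Sum>p\<leftarrow>ps. f p) * (\<Sum>q\<leftarrow>qs. (g q :: complex))"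
  by (simp add: sum_list_const_mult sum_list_mult_const)

lemma hl3: "(\<Sum>i\<leftarrow>[0..<m]. f i) = (\<Sum>i<m. (f i :: complex))"
  by (induction m) auto

lemma hl4: "(\<Sum>x\<leftarrow>L. f x) = (\<Sum>i<length L. (f (L ! i) :: complex))"
  by (induction L) (simp_all del: sum.lessThan_Suc add: sum.lessThan_Suc_shift)

lemma la2_set: "list_all2 R vs ws \<Longrightarrow> x \<in> set vs \<Longrightarrow> \<exists>w\<in>set ws. R x w"
  by (induction rule: list_all2_induct) auto



theorem corollary19:
  fixes d1 d2 :: nat and X :: "complex mat"
  assumes "2 \<le> d1" and "d1 \<le> d2"
    and "psd (d1 * d2) X"
    and "schmidt_number d1 d2 X = d1"
  shows "\<exists>k1 < d1. \<exists>k2 < d1. k1 \<noteq> k2 \<and>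
    entangled 2 d2 (block_mat 2 d2 (\<lambda>s t. block d2 X ([k1, k2] ! s) ([k1, k2] ! t)))"
proof -
  define N where "N = d1 * d2"
  define Ym where "Ym = block_mat 2 d2 (\<lambda>s t. block d2 X ([0, 1] ! s) ([0, 1] ! t))"
  have d2pos: "0 < d2" using assms(1,2) by simp
  have nN: "2 * d2 \<le> N" unfolding N_def using assms(1) by (intro mult_le_mono1)
  have Xf: "psdf N (\<lambda>i j. X $$ (i, j))" unfolding N_def by (rule psd_to_psdf[OF assms(3)])
  have nth01: "[0, 1] ! (r div d2) = r div d2" if "r < 2 * d2" for r :: nat
  proof -
    have "r div d2 < 2" using that d2pos by (simp add: div_less_iff_less_mult mult.commute)
    then have "r div d2 = 0 \<or> r div d2 = 1" by linarith
    then show ?thesis by auto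
  qed
  have Yent: "\<forall>r<2 * d2. \<forall>c<2 * d2. Ym $$ (r, c) = X $$ (r, c)"
  proof (intro allI impI)
    fix r c assume r: "r < 2 * d2" and c: "c < 2 * d2"
    have "Ym $$ (r, c) = block d2 X (r div d2) (c div d2) $$ (r mod d2, c mod d2)"
      unfolding Ym_def block_mat_def using r c nth01[OF r] nth01[OF c] by simp
    also have "\<dots> = X $$ (r div d2 * d2 + r mod d2, c div d2 * d2 + c mod d2)"
      unfolding block_def using d2pos by simp
    also have "\<dots> = X $$ (r, c)" by simp
    finally show "Ym $$ (r, c) = X $$ (r, c)" .
  qed
  have Ycar: "Ym \<in> carrier_mat (2 * d2) (2 * d2)" unfolding Ym_def block_mat_def by simp
  have Ypsd: "psd (2 * d2) Ym"
  proof (rule psdf_to_psd[OF Ycar])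
    show "psdf (2 * d2) (\<lambda>i j. Ym $$ (i, j))"
      by (rule psdf_cong[OF psdf_restrict[OF Xf nN]]) (use Yent in simp)
  qed
  have notsep: "\<not> separable 2 d2 Ym"
  proof
    assume "separable 2 d2 Ym"
    then obtain m :: nat and P Q where PQ: "\<forall>i<m. psd 2 (P i) \<and> psd d2 (Q i)"
      and sepY: "\<forall>r<2 * d2. \<forall>c<2 * d2. Ym $$ (r, c) = (\<Sum>i<m. kron 2 d2 (P i) (Q i) $$ (r, c))"
      unfolding separable_def by blast
    have "\<forall>i. \<exists>ps. i < m \<longrightarrow> (\<forall>a<2. \<forall>b<2. P i $$ (a, b) = (\<Sum>p\<leftarrow>ps. p a * cnj (p b)))"
    proof
      fix i
      show "\<exists>ps. i < m \<longrightarrow> (\<forall>a<2. \<forall>b<2. P i $$ (a, b) = (\<Sum>p\<leftarrow>ps. p a * cnj (p b)))"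
      proof (cases "i < m")
        case True
        then have "psd 2 (P i)" using PQ by blast
        from chol[OF psd_to_psdf[OF this]] obtain ps where "\<forall>a<2. \<forall>b<2. P i $$ (a, b) = (\<Sum>p\<leftarrow>ps. p a * cnj (p b))"
          by blast
        then show ?thesis by blast
      qed simp
    qed
    from choice[OF this] obtain psf where psf: "\<forall>i. i < m \<longrightarrow> (\<forall>a<2. \<forall>b<2. P i $$ (a, b) = (\<Sum>p\<leftarrow>psf i. p a * cnj (p b)))"
      by blast
    have "\<forall>i. \<exists>qs. i < m \<longrightarrow> (\<forall>a<d2. \<forall>b<d2. Q i $$ (a, b) = (\<Sum>q\<leftarrow>qs. q a * cnj (q b)))"
    proof
      fix i
      show "\<exists>qs. i < m \<longrightarrow> (\<forall>a<d2. \<forall>b<d2. Q i $$ (a, b) = (\<Sum>p\<leftarrow>qs. p a * cnj (p b)))"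
      proof (cases "i < m")
        case True
        then have "psd d2 (Q i)" using PQ by blast
        from chol[OF psd_to_psdf[OF this]] obtain qs where "\<forall>a<d2. \<forall>b<d2. Q i $$ (a, b) = (\<Sum>p\<leftarrow>qs. p a * cnj (p b))"
          by blast
        then show ?thesis by blast
      qed simp
    qed
    from choice[OF this] obtain qsf where qsf: "\<forall>i. i < m \<longrightarrow> (\<forall>a<d2. \<forall>b<d2. Q i $$ (a, b) = (\<Sum>q\<leftarrow>qsf i. q a * cnj (q b)))"
      by blast
    define ws where "ws = concat (map (\<lambda>i. concat (map (\<lambda>p. map (\<lambda>q. (\<lambda>r. p (r div d2) * q (r mod d2))) (qsf i)) (psf i))) [0..<m])"
    have top: "\<forall>r<2 * d2. \<forall>c<2 * d2. X $$ (r, c) = (\<Sum>w\<leftarrow>ws. w r * cnj (w c))"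
    proof (intro allI impI)
      fix r c assume r: "r < 2 * d2" and c: "c < 2 * d2"
      have rd: "r div d2 < 2" "c div d2 < 2" using r c d2pos by (simp_all add: div_less_iff_less_mult mult.commute)
      have rm: "r mod d2 < d2" "c mod d2 < d2" using d2pos by simp_all
      have "(\<Sum>w\<leftarrow>ws. w r * cnj (w c)) = (\<Sum>i\<leftarrow>[0..<m]. \<Sum>p\<leftarrow>psf i. \<Sum>q\<leftarrow>qsf i.
           (p (r div d2) * cnj (p (c div d2))) * (q (r mod d2) * cnj (q (c mod d2))))"
        unfolding ws_def hl1 by (simp add: o_def hl1 mult_ac)
      also have "\<dots> = (\<Sum>i\<leftarrow>[0..<m]. (\<Sum>p\<leftarrow>psf i. p (r div d2) * cnj (p (c div d2))) *
           (\<Sum>q\<leftarrow>qsf i. q (r mod d2) * cnj (q (c mod d2))))"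
        by (simp only: hl2)
      also have "\<dots> = (\<Sum>i\<leftarrow>[0..<m]. P i $$ (r div d2, c div d2) * Q i $$ (r mod d2, c mod d2))"
        by (rule arg_cong[where f = sum_list], rule map_cong[OF refl]) (use psf qsf rd rm in simp)
      also have "\<dots> = (\<Sum>i<m. P i $$ (r div d2, c div d2) * Q i $$ (r mod d2, c mod d2))" by (rule hl3)
      also have "\<dots> = (\<Sum>i<m. kron 2 d2 (P i) (Q i) $$ (r, c))"
        unfolding kron_def using r c by simp
      also have "\<dots> = Ym $$ (r, c)" using sepY r c by simp
      also have "\<dots> = X $$ (r, c)" using Yent r c by simp
      finally show "X $$ (r, c) = (\<Sum>w\<leftarrow>ws. w r * cnj (w c))" by simp
    qed
    obtain vs us where vs: "list_all2 (\<lambda>v w. \<forall>r<2 * d2. v r = w r) vs ws"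
      and us: "\<forall>u\<in>set us. \<forall>r<2 * d2. u r = 0"
      and dec: "\<forall>r<N. \<forall>c<N. X $$ (r, c) = (\<Sum>x\<leftarrow>vs @ us. x r * cnj (x c))"
      using decomp[OF Xf nN top] by blast
    define L where "L = vs @ us"
    have shape: "\<exists>al be y. \<forall>t<d2. x t = al * y t \<and> x (d2 + t) = be * y t" if x: "x \<in> set L" for x
    proof (cases "x \<in> set vs")
      case True
      obtain w where w: "w \<in> set ws" "\<forall>r<2 * d2. x r = w r" using la2_set[OF vs True] by blast
      obtain i p q where w': "w = (\<lambda>r. p (r div d2) * q (r mod d2))"
        using w(1) unfolding ws_def by auto
      show ?thesis
      proof (intro exI allI impI conjI)
        fix t assume t: "t < d2"
        show "x t = p 0 * q t" using w(2) w' t by simp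
        have "(d2 + t) div d2 = 1" "(d2 + t) mod d2 = t" using t d2pos by simp_all
        then show "x (d2 + t) = p 1 * q t" using w(2) w' t by simp
      qed
    next
      case False
      then have "x \<in> set us" using x unfolding L_def by simp
      then have "\<forall>r<2 * d2. x r = 0" using us by blast
      then show ?thesis by (intro exI[of _ 0] exI[of _ "\<lambda>_. 0"]) auto
    qed
    have "schmidt_number d1 d2 X \<le> d1 - 1"
      unfolding schmidt_number_def
    proof (rule Least_le, intro exI conjI allI impI)
      fix i assume i: "i < length L"
      show "(0::real) < 1" by simp
      show "vec (d1 * d2) (L ! i) \<in> carrier_vec (d1 * d2)" by simp
      obtain al be y where "\<forall>t<d2. (L ! i) t = al * y t \<and> (L ! i) (d2 + t) = be * y t"
        using shape[of "L ! i"] i by auto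
      then show "schmidt_rank d1 d2 (vec (d1 * d2) (L ! i)) \<le> d1 - 1"
        by (rule schmidt_bound[OF assms(1)])
    next
      fix r c assume r: "r < d1 * d2" and c: "c < d1 * d2"
      have "X $$ (r, c) = (\<Sum>x\<leftarrow>L. x r * cnj (x c))" using dec r c unfolding L_def N_def by blast
      also have "\<dots> = (\<Sum>i<length L. (L ! i) r * cnj ((L ! i) c))" by (rule hl4)
      also have "\<dots> = (\<Sum>i<length L. complex_of_real 1 * outer (d1 * d2) (vec (d1 * d2) (L ! i)) $$ (r, c))"
        unfolding outer_def using r c by simp
      finally show "X $$ (r, c) = (\<Sum>i<length L. complex_of_real 1 * outer (d1 * d2) (vec (d1 * d2) (L ! i)) $$ (r, c))" .
    qed
    then show False using assms(1,4) by simp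
  qed
  have ent: "entangled 2 d2 (block_mat 2 d2 (\<lambda>s t. block d2 X ([0, 1] ! s) ([0, 1] ! t)))"
    unfolding entangled_def Ym_def[symmetric] using Ypsd notsep by simp
  have h: "(0::nat) < d1" "(1::nat) < d1" using assms(1) by simp_all
  have "(1::nat) < d1 \<and> (0::nat) \<noteq> 1 \<and> entangled 2 d2 (block_mat 2 d2 (\<lambda>s t. block d2 X ([0, 1] ! s) ([0, 1] ! t)))"
    using h ent by simp
  then have "\<exists>k2<d1. (0::nat) \<noteq> k2 \<and> entangled 2 d2 (block_mat 2 d2 (\<lambda>s t. block d2 X ([0, k2] ! s) ([0, k2] ! t)))"
    by (rule exI[where x = 1])
  then have "(0::nat) < d1 \<and> (\<exists>k2<d1. (0::nat) \<noteq> k2 \<and> entangled 2 d2 (block_mat 2 d2 (\<lambda>s t. block d2 X ([0, k2] ! s) ([0, k2] ! t))))"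
    using h by simp
  then show ?thesis by (rule exI[where x = 0])
qed

end
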